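(* Let $\Phi_0$ be a finite reduced root system with simple roots $\{\alpha_i\mid i\in I_0\}$, root lattice $Q_0=\bigoplus_{i\in I_0}\mathbb{Z}\alpha_i$, $Q_{0,+}=\bigoplus_{i\in I_0}\mathbb{N}\alpha_i$, and Weyl group $W_0$. Let $P\subseteq Q_{0,+}\cup(-Q_{0,+})$ be a $W_0$-stable subset. Then every $\alpha\in P$ is $W_0$-conjugate to an integer multiple of a simple root. *)

theory Defs
  imports "HOL-Analysis.Analysis"
begin

definition refl_vec :: "'a::real_inner \<Rightarrow> 'a \<Rightarrow> 'a" where
  "refl_vec a v = v - ((2 * (v \<bullet> a)) / (a \<bullet> a)) *\<^sub>R a"

definition reduced_root_system :: "'a::euclidean_space set \<Rightarrow> bool" where
  "reduced_root_system R \<longleftrightarrow>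
     finite R \<and> 0 \<notin> R \<and> span R = UNIV \<and>
     (\<forall>a\<in>R. \<forall>b\<in>R. refl_vec a b \<in> R) \<and>
     (\<forall>a\<in>R. \<forall>b\<in>R. (2 * (b \<bullet> a)) / (a \<bullet> a) \<in> \<int>) \<and>
     (\<forall>a\<in>R. \<forall>c::real. c *\<^sub>R a \<in> R \<longrightarrow> c = 1 \<or> c = -1)"

definition pos_root_cone :: "'a::real_vector set \<Rightarrow> 'a set" where
  "pos_root_cone S = {v. \<exists>c::'a \<Rightarrow> nat. v = (\<Sum>a\<in>S. real (c a) *\<^sub>R a)}"

definition root_lattice :: "'a::real_vector set \<Rightarrow> 'a set" where
  "root_lattice S = {v. \<exists>c::'a \<Rightarrow> int. v = (\<Sum>a\<in>S. real_of_int (c a) *\<^sub>R a)}"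

definition simple_roots :: "'a::euclidean_space set \<Rightarrow> 'a set \<Rightarrow> bool" where
  "simple_roots R S \<longleftrightarrow> S \<subseteq> R \<and> independent S \<and>
     (\<forall>b\<in>R. b \<in> pos_root_cone S \<or> - b \<in> pos_root_cone S)"

inductive_set weyl_group :: "'a::real_inner set \<Rightarrow> ('a \<Rightarrow> 'a) set" for R where
  weyl_id: "id \<in> weyl_group R"
| weyl_step: "w \<in> weyl_group R \<Longrightarrow> a \<in> R \<Longrightarrow> refl_vec a \<circ> w \<in> weyl_group R"

end

theory Submission imports Defs begin
lemma uniq:
  fixes S :: "'a::euclidean_space set"
  assumes "independent S" "finite S" "(\<Sum>a\<in>S. f a *\<^sub>R a) = (\<Sum>a\<in>S. g a *\<^sub>R a)" "b \<in> S"
  shows "f b = g b"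
proof -
  have "(\<Sum>a\<in>S. (f a - g a) *\<^sub>R a) = 0"
    using assms(3) by (simp add: scaleR_diff_left sum_subtractf)
  hence "f b - g b = 0"
    using assms(1,2,4) by (rule_tac real_vector.independentD[where t=S and u="\<lambda>a. f a - g a"]) auto
  thus ?thesis by simp
qed

lemma weyl_comp: "w \<in> weyl_group R \<Longrightarrow> a \<in> R \<Longrightarrow> w \<circ> refl_vec a \<in> weyl_group R"
proof (induction rule: weyl_group.induct)
  case weyl_id
  then show ?case using weyl_group.weyl_step[OF weyl_group.weyl_id] by auto
next
  case (weyl_step w b)
  then have "w \<circ> refl_vec a \<in> weyl_group R" by (simp add: comp_def)
  hence "refl_vec b \<circ> (w \<circ> refl_vec a) \<in> weyl_group R" using weyl_step.hyps(2) by (rule weyl_group.weyl_step)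
  thus ?case by (simp add: comp_def)
qed

lemma weyl_neg: "w \<in> weyl_group R \<Longrightarrow> w (-x) = - w x"
  by (induction arbitrary: x rule: weyl_group.induct) (auto simp: refl_vec_def)

lemma main:
  fixes R S P :: "'a::euclidean_space set"
  assumes R: "reduced_root_system R"
    and S: "simple_roots R S"
    and Pcone: "P \<subseteq> pos_root_cone S \<union> uminus ` pos_root_cone S"
    and Pst: "\<And>w x. w \<in> weyl_group R \<Longrightarrow> x \<in> P \<Longrightarrow> w x \<in> P"
    and ne: "S \<noteq> {}"
  shows "(\<Sum>a\<in>S. real (c a) *\<^sub>R a) \<in> P \<Longrightarrow>
     \<exists>w\<in>weyl_group R. \<exists>a\<in>S. \<exists>n::int. w (\<Sum>a\<in>S. real (c a) *\<^sub>R a) = real_of_int n *\<^sub>R a"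
proof (induction "sum c S" arbitrary: c rule: less_induct)
  case less
  have fin: "finite S" using R S unfolding reduced_root_system_def simple_roots_def
    using finite_subset by blast
  have ind: "independent S" using S unfolding simple_roots_def by blast
  have SR: "S \<subseteq> R" using S unfolding simple_roots_def by blast
  have R0: "0 \<notin> R" using R unfolding reduced_root_system_def by blast
  have Rint: "\<And>a b. a \<in> R \<Longrightarrow> b \<in> R \<Longrightarrow> (2 * (b \<bullet> a)) / (a \<bullet> a) \<in> \<int>"
    using R unfolding reduced_root_system_def by blast
  define y where "y = (\<Sum>a\<in>S. real (c a) *\<^sub>R a)"
  have yP: "y \<in> P" using less.prems y_def by simp
  show ?case
  proof (cases "\<exists>a1\<in>S. \<exists>a2\<in>S. a1 \<noteq> a2 \<and> c a1 > 0 \<and> c a2 > 0")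
    case False
    obtain a0 where a0: "a0 \<in> S" "\<forall>a\<in>S - {a0}. c a = 0"
    proof (cases "\<exists>a\<in>S. c a > 0")
      case True
      then obtain a0 where a0: "a0 \<in> S" "c a0 > 0" by blast
      have "\<forall>a\<in>S - {a0}. c a = 0" using False a0 by (metis DiffE insertI1 neq0_conv)
      with a0(1) show ?thesis by (rule that)
    next
      case F2: False
      from ne obtain a0 where a0: "a0 \<in> S" by blast
      have "\<forall>a\<in>S - {a0}. c a = 0" using F2 by auto
      with a0(1) show ?thesis by (rule that)
    qed
    have "y = real (c a0) *\<^sub>R a0"
      unfolding y_def using sum.remove[OF fin a0(1), of "\<lambda>a. real (c a) *\<^sub>R a"] a0(2)
      by simp
    then have "id y = real_of_int (int (c a0)) *\<^sub>R a0" by simp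
    then show ?thesis using a0(1) weyl_group.weyl_id y_def by metis
  next
    case True
    then obtain a1 a2 where a12: "a1 \<in> S" "a2 \<in> S" "a1 \<noteq> a2" "c a1 > 0" "c a2 > 0" by blast
    have "y \<noteq> 0"
    proof
      assume "y = 0"
      hence "(\<Sum>a\<in>S. real (c a) *\<^sub>R a) = (\<Sum>a\<in>S. (\<lambda>_. 0::real) a *\<^sub>R a)" unfolding y_def by simp
      from uniq[OF ind fin this a12(1)] a12(4) show False by simp
    qed
    hence "0 < y \<bullet> y" by simp
    also have "y \<bullet> y = (\<Sum>a\<in>S. real (c a) * (a \<bullet> y))"
      unfolding y_def[of] by (simp add: inner_sum_left)
    finally have "\<exists>b\<in>S. 0 < real (c b) * (b \<bullet> y)"
      by (metis (no_types, lifting) not_less sum_nonpos)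
    then obtain b where b: "b \<in> S" "0 < real (c b) * (b \<bullet> y)" by blast
    have by0: "0 < b \<bullet> y" using b(2) by (simp add: zero_less_mult_iff)
    have bR: "b \<in> R" using b SR by blast
    have bb: "0 < b \<bullet> b" using bR R0 by (metis inner_gt_zero_iff)
    define k where "k = 2 * (y \<bullet> b) / (b \<bullet> b)"
    have "k = (\<Sum>a\<in>S. real (c a) * (2 * (a \<bullet> b) / (b \<bullet> b)))"
      unfolding k_def y_def by (simp add: inner_sum_left sum_divide_distrib sum_distrib_left mult.commute mult.left_commute)
    also have "\<dots> \<in> \<int>"
      using Rint bR SR by (intro Ints_sum Ints_mult) (auto simp: Ints_of_nat)
    finally obtain m where m: "k = of_int m" by (auto elim: Ints_cases)
    have kpos: "k > 0" unfolding k_def using by0 bb by (simp add: inner_commute)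
    define e where "e a = real (c a) - (if a = b then k else 0)" for a
    define z where "z = refl_vec b y"
    have "z = y - k *\<^sub>R b" unfolding z_def refl_vec_def k_def by simp
    also have "\<dots> = (\<Sum>a\<in>S. e a *\<^sub>R a)"
    proof -
      have "(\<Sum>a\<in>S. (if a = b then k else 0) *\<^sub>R a) = (\<Sum>a\<in>S. if a = b then k *\<^sub>R b else 0)"
        by (rule sum.cong) auto
      also have "\<dots> = k *\<^sub>R b" using b(1) fin by (simp add: sum.delta)
      finally have "(\<Sum>a\<in>S. (if a = b then k else 0) *\<^sub>R a) = k *\<^sub>R b" .
      thus ?thesis unfolding e_def y_def by (simp add: scaleR_diff_left sum_subtractf)
    qed
    finally have ze: "z = (\<Sum>a\<in>S. e a *\<^sub>R a)" .
    have zP: "z \<in> P" unfolding z_def using Pst[OF weyl_group.weyl_step[OF weyl_group.weyl_id bR] yP] by simp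
    obtain g where g: "g \<in> S" "g \<noteq> b" "c g > 0" using a12 by metis
    have eg: "e g > 0" using g unfolding e_def by simp
    have "z \<in> pos_root_cone S"
    proof (rule ccontr)
      assume "z \<notin> pos_root_cone S"
      with zP Pcone obtain d :: "'a \<Rightarrow> nat" where "z = - (\<Sum>a\<in>S. real (d a) *\<^sub>R a)"
        unfolding pos_root_cone_def by blast
      hence "(\<Sum>a\<in>S. e a *\<^sub>R a) = (\<Sum>a\<in>S. (- real (d a)) *\<^sub>R a)"
        using ze by (simp add: sum_negf)
      from uniq[OF ind fin this g(1)] eg show False by simp
    qed
    then obtain d :: "'a \<Rightarrow> nat" where d: "z = (\<Sum>a\<in>S. real (d a) *\<^sub>R a)"
      unfolding pos_root_cone_def by blast
    have de: "\<And>a. a \<in> S \<Longrightarrow> real (d a) = e a"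
      using uniq[OF ind fin] d ze by metis
    have "real (sum d S) = (\<Sum>a\<in>S. e a)" using de by simp
    also have "\<dots> = real (sum c S) - k"
      unfolding e_def using b(1) fin by (simp add: sum_subtractf sum.delta)
    finally have "sum d S < sum c S" using kpos by linarith
    from less.hyps[OF this] zP d obtain w a n where
      w: "w \<in> weyl_group R" "a \<in> S" "w z = real_of_int n *\<^sub>R a" by metis
    have "(w \<circ> refl_vec b) y = real_of_int n *\<^sub>R a" using w z_def by simp
    then show ?thesis using weyl_comp[OF w(1) bR] w(2) y_def by metis
  qed
qed
theorem lemma8p19:
  fixes R S P :: "'a::euclidean_space set"
  assumes "reduced_root_system R"
    and "simple_roots R S"
    and "P \<subseteq> pos_root_cone S \<union> uminus ` pos_root_cone S"
    and "\<And>w x. w \<in> weyl_group R \<Longrightarrow> x \<in> P \<Longrightarrow> w x \<in> P"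
  shows "\<forall>x\<in>P. \<exists>w\<in>weyl_group R. \<exists>a\<in>S. \<exists>n::int. w x = real_of_int n *\<^sub>R a"
proof
  fix x assume xP: "x \<in> P"
  have "R \<noteq> {}"
  proof
    assume "R = {}"
    hence "span R = {0}" by simp
    hence U: "(UNIV::'a set) = {0}" using assms(1) unfolding reduced_root_system_def by simp
    obtain e :: 'a where "e \<in> Basis" using nonempty_Basis by blast
    hence "e \<noteq> 0" by auto
    thus False using U by auto
  qed
  then obtain b where bR: "b \<in> R" by blast
  have ne: "S \<noteq> {}"
  proof
    assume "S = {}"
    hence "pos_root_cone S = {0}" unfolding pos_root_cone_def by simp
    moreover have "b \<in> pos_root_cone S \<or> - b \<in> pos_root_cone S"
      using assms(2) bR unfolding simple_roots_def by blast
    ultimately have "b = 0" by auto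
    thus False using bR assms(1) unfolding reduced_root_system_def by blast
  qed
  show "\<exists>w\<in>weyl_group R. \<exists>a\<in>S. \<exists>n::int. w x = real_of_int n *\<^sub>R a"
  proof (cases "x \<in> pos_root_cone S")
    case True
    then obtain c :: "'a \<Rightarrow> nat" where c: "x = (\<Sum>a\<in>S. real (c a) *\<^sub>R a)"
      unfolding pos_root_cone_def by blast
    have "\<exists>w\<in>weyl_group R. \<exists>a\<in>S. \<exists>n::int. w (\<Sum>a\<in>S. real (c a) *\<^sub>R a) = real_of_int n *\<^sub>R a"
      by (rule main[where R=R and S=S and P=P and c=c]) (use assms ne xP c in auto)
    then show ?thesis using c by simp
  next
    case False
    with xP assms(3) obtain y where y: "y \<in> pos_root_cone S" "x = - y" by blast
    then obtain c :: "'a \<Rightarrow> nat" where c: "y = (\<Sum>a\<in>S. real (c a) *\<^sub>R a)"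
      unfolding pos_root_cone_def by blast
    have P1: "uminus ` P \<subseteq> pos_root_cone S \<union> uminus ` pos_root_cone S"
      using assms(3) by auto
    have P2: "w x' \<in> uminus ` P" if "w \<in> weyl_group R" "x' \<in> uminus ` P" for w x'
    proof -
      from that(2) obtain p where p: "p \<in> P" "x' = - p" by blast
      have "w x' = - w p" using weyl_neg[OF that(1)] p by simp
      thus ?thesis using assms(4)[OF that(1) p(1)] by blast
    qed
    have "y \<in> uminus ` P" using xP y by (metis image_eqI minus_minus)
    then have "\<exists>w\<in>weyl_group R. \<exists>a\<in>S. \<exists>n::int. w (\<Sum>a\<in>S. real (c a) *\<^sub>R a) = real_of_int n *\<^sub>R a"
      by (rule_tac main[where R=R and S=S and P="uminus ` P" and c=c]) (use assms(1,2) P1 P2 ne c in auto)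
    then obtain w a n where
      w: "w \<in> weyl_group R" "a \<in> S" "w y = real_of_int n *\<^sub>R a" using c by metis
    have "w x = real_of_int (- n) *\<^sub>R a" using weyl_neg[OF w(1), of y] w(3) y(2) by simp
    thus ?thesis using w by blast
  qed
qed

end
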